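(* Let $C_0$ be a binary linear $[n_0,n_0-r_0,3]_2 2$ code (minimum distance $3$, covering radius $2$) with parity-check matrix $H_0=[h_1\cdots h_{n_0}]$, $h_j\in\mathbb{F}_2^{r_0}$, and let $\mathcal P_0$ be a $2$-partition of the columns of $H_0$ into $p$ subsets. Let $m\ge 1$ satisfy $2^m\ge p$. Choose an indicator assignment $\beta_1,\dots,\beta_{n_0}$ with all $\beta_j\in\{*\}\cup(\mathbb{F}_{2^m}\setminus\{1\})$. Fix a nonzero column $w\in\mathbb{F}_2^m$, let $W_m\setminus w$ be $W_m$ with the column $w$ removed, and let $$D_6=\begin{bmatrix}0_{r_0}&0_{r_0}&0_{r_0}\\ W_m\setminus w& w& 0_m\\ 0_m& w& W_m\setminus w\end{bmatrix}$$ (an $(r_0+2m)\times(2^{m+1}-3)$ matrix, $0_v$ denoting zero blocks with $v$ rows). Let $H_C=[D_6\ A_2(h_1,\beta_1)\ \cdots\ A_2(h_{n_0},\beta_{n_0})]$. Then $H_C$ is the parity-check matrix of a binary linear $[n,n-r,3]_2 2$ code with $n=2^m(n_0+2)-3$ and $r=r_0+2m$; i.e. every vector of $\mathbb{F}_2^{r}$ is a column of $H_C$ or a sum of two columns of $H_C$.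
   Context: For a binary linear code with $r\times n$ parity-check matrix $H$ ($r$ = codimension), the covering radius is the smallest $R$ such that every vector of $\mathbb{F}_2^r$ is a sum of at most $R$ columns of $H$ (the zero vector being the empty sum). An $[n,n-r,d]_2R$ code is a binary linear code of length $n$, codimension $r$, minimum distance $d$, covering radius $R$. Partitions: for an $r\times n$ parity-check matrix $H$ and $0\le\ell\le R$, a partition of the column set of $H$ into nonempty subsets is an $(R,\ell)$-partition if every vector of $\mathbb{F}_2^r$ (including zero) is the sum of at least $\ell$ and at most $R$ columns of $H$ lying in pairwise distinct subsets (for $\ell=0$ the zero vector is the empty sum). For $R=2$ and minimum distance $\ge3$, a $(2,0)$-partition is called a $2$-partition. Construction notation: fix $m\ge1$ and identify $\mathbb{F}_2^m$ with the field $\mathbb{F}_{2^m}$ via a fixed $\mathbb{F}_2$-basis, so field products apply to $m$-bit columns. For $h\in\mathbb{F}_2^{r_0}$, an integer $R\ge2$ and $\beta\in\mathbb{F}_{2^m}\cup\{*\}$, $A_R(h,\beta)$ is the $(r_0+Rm)\times 2^m$ binary matrix whose columns, indexed by $\xi\in\mathbb{F}_{2^m}$, are $(h,\xi,\beta\xi,\beta^2\xi,\dots,\beta^{R-1}\xi)^T$ if $\beta\in\mathbb{F}_{2^m}$, and $(h,0_{(R-1)m},\xi)^T$ if $\beta=*$. $W_m$ is the $m\times(2^m-1)$ matrix whose columns are all nonzero vectors of $\mathbb{F}_2^m$ (parity-check matrix of the Hamming code). Given $H_0=[h_1\cdots h_{n_0}]$ and a partition $\mathcal P_0$ of its columns,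 an indicator assignment is a choice $\beta_j\in\mathbb{F}_{2^m}\cup\{*\}$ for each $j$ such that $\beta_i\ne\beta_j$ whenever $h_i,h_j$ lie in distinct subsets of $\mathcal P_0$. *)

theory Defs
  imports "HOL-Analysis.Finite_Cartesian_Product" "HOL-Library.Z2" "HOL-Library.Disjoint_Sets"
begin

(* A matrix is represented by the list of its columns.  Columns are elements of an
   additive group 'v (for binary codes: an F_2-vector space such as bit^'r). *)

definition sum_cols :: "'v::comm_monoid_add list \<Rightarrow> nat set \<Rightarrow> 'v" where
  "sum_cols H S = (\<Sum>i\<in>S. H ! i)"

definition covered_by :: "'v::comm_monoid_add list \<Rightarrow> nat \<Rightarrow> 'v \<Rightarrow> bool" where
  "covered_by H R v \<longleftrightarrow> (\<exists>S \<subseteq> {..<length H}. card S \<le> R \<and> sum_cols H S = v)"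

definition has_covering_radius :: "'v::comm_monoid_add list \<Rightarrow> nat \<Rightarrow> bool" where
  "has_covering_radius H R \<longleftrightarrow>
     (\<forall>v. covered_by H R v) \<and> (\<forall>R' < R. \<not> (\<forall>v. covered_by H R' v))"

(* the code with parity-check matrix H: supports of codewords *)
definition codewords :: "'v::comm_monoid_add list \<Rightarrow> nat set set" where
  "codewords H = {S. S \<subseteq> {..<length H} \<and> sum_cols H S = 0}"

definition has_min_distance :: "'v::comm_monoid_add list \<Rightarrow> nat \<Rightarrow> bool" where
  "has_min_distance H d \<longleftrightarrow>
     (\<exists>S \<in> codewords H. S \<noteq> {} \<and> card S = d) \<and>
     (\<forall>S \<in> codewords H. S \<noteq> {} \<longrightarrow> d \<le> card S)"

definition is_code :: "'v::comm_monoid_add list \<Rightarrow> nat \<Rightarrow> nat \<Rightarrow> nat \<Rightarrow> nat \<Rightarrow> bool" where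
  "is_code H n k d R \<longleftrightarrow> length H = n \<and> card (codewords H) = 2 ^ k \<and>
     has_min_distance H d \<and> has_covering_radius H R"

definition is_2_partition :: "'v::comm_monoid_add list \<Rightarrow> nat set set \<Rightarrow> bool" where
  "is_2_partition H P \<longleftrightarrow> partition_on {..<length H} P \<and>
     (\<forall>v. \<exists>S \<subseteq> {..<length H}. card S \<le> 2 \<and> sum_cols H S = v \<and>
          (\<forall>i\<in>S. \<forall>j\<in>S. i \<noteq> j \<longrightarrow> \<not> (\<exists>B\<in>P. i \<in> B \<and> j \<in> B)))"

(* indicator assignment: beta i \<noteq> beta j for columns in distinct subsets;
   None plays the role of the symbol * *)
definition indicator_assignment :: "nat \<Rightarrow> nat set set \<Rightarrow> (nat \<Rightarrow> 'f option) \<Rightarrow> bool" where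
  "indicator_assignment n0 P \<beta> \<longleftrightarrow>
     (\<forall>i<n0. \<forall>j<n0. \<not> (\<exists>B\<in>P. i \<in> B \<and> j \<in> B) \<longrightarrow> \<beta> i \<noteq> \<beta> j)"

definition field_elems :: "'f::finite list" where
  "field_elems = (SOME xs. distinct xs \<and> set xs = UNIV)"

definition A2 :: "'h \<Rightarrow> 'f::{field,finite} option \<Rightarrow> ('h \<times> 'f \<times> 'f) list" where
  "A2 h \<beta> = (case \<beta> of
      Some b \<Rightarrow> map (\<lambda>\<xi>. (h, \<xi>, b * \<xi>)) field_elems
    | None \<Rightarrow> map (\<lambda>\<xi>. (h, 0, \<xi>)) field_elems)"

definition W_minus :: "'f::{field,finite} \<Rightarrow> 'f list" where
  "W_minus w = filter (\<lambda>u. u \<noteq> 0 \<and> u \<noteq> w) field_elems"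

definition D6 :: "'f::{field,finite} \<Rightarrow> ('h::zero \<times> 'f \<times> 'f) list" where
  "D6 w = map (\<lambda>u. (0, u, 0)) (W_minus w) @ [(0, w, w)] @ map (\<lambda>u. (0, 0, u)) (W_minus w)"

definition HC :: "'f::{field,finite} \<Rightarrow> 'h::zero list \<Rightarrow> (nat \<Rightarrow> 'f option) \<Rightarrow> ('h \<times> 'f \<times> 'f) list" where
  "HC w H0 \<beta> = D6 w @ concat (map (\<lambda>j. A2 (H0 ! j) (\<beta> j)) [0..<length H0])"

end

theory Submission imports Defs "HOL-Number_Theory.Residues" "HOL-Computational_Algebra.Computational_Algebra" begin


lemma char2:
  assumes "CARD('f::{field,finite}) = 2 ^ m" "m \<ge> 1"
  shows "(1::'f) + 1 = 0"
proof -
  have pos: "CHAR('f) > 0" by (rule finite_imp_CHAR_pos) simp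
  hence pr: "prime CHAR('f)" by (rule prime_CHAR_semidom)
  have "CHAR('f) dvd 2 ^ m" using CHAR_dvd_CARD[where 'a='f] assms by simp
  hence "CHAR('f) dvd 2" using pr prime_dvd_power by blast
  hence "CHAR('f) \<le> 2" by (simp add: dvd_imp_le)
  moreover have "CHAR('f) > 1" using pr prime_gt_1_nat by blast
  ultimately have "CHAR('f) = 2" by simp
  hence "of_nat 2 = (0::'f)" by (metis of_nat_CHAR)
  thus ?thesis by simp
qed

lemma bit_self_add: "(b::bit) + b = 0" by (cases b) simp_all

lemma vec_self_add: "(x::bit^'r) + x = 0"
  by (simp add: vec_eq_iff bit_self_add)

lemma sum_cols_distinct:
  assumes "distinct H" "S \<subseteq> {..<length H}"
  shows "sum_cols H S = \<Sum>(nth H ` S)" "card (nth H ` S) = card S"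
proof -
  have inj: "inj_on (nth H) S" using assms by (intro inj_on_nth) auto
  show "sum_cols H S = \<Sum>(nth H ` S)" unfolding sum_cols_def using sum.reindex[OF inj, of id] by simp
  show "card (nth H ` S) = card S" using card_image[OF inj] .
qed

lemma covered_distinct:
  assumes "distinct H"
  shows "covered_by H R v \<longleftrightarrow> (\<exists>T\<subseteq>set H. card T \<le> R \<and> \<Sum>T = v)"
proof
  assume "covered_by H R v"
  then obtain S where S: "S \<subseteq> {..<length H}" "card S \<le> R" "sum_cols H S = v"
    unfolding covered_by_def by blast
  show "\<exists>T\<subseteq>set H. card T \<le> R \<and> \<Sum>T = v"
    using S sum_cols_distinct[OF assms S(1)] by (intro exI[of _ "nth H ` S"]) (auto simp: set_conv_nth)
next
  assume "\<exists>T\<subseteq>set H. card T \<le> R \<and> \<Sum>T = v"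
  then obtain T where T: "T \<subseteq> set H" "card T \<le> R" "\<Sum>T = v" by blast
  define S where "S = {i. i < length H \<and> H ! i \<in> T}"
  have S1: "S \<subseteq> {..<length H}" unfolding S_def by auto
  have "nth H ` S = T" using T(1) unfolding S_def by (auto simp: set_conv_nth)
  thus "covered_by H R v" unfolding covered_by_def using sum_cols_distinct[OF assms S1] T
    by (intro exI[of _ S]) (auto simp: S1)
qed

lemma mindist3:
  fixes H :: "'v::comm_monoid_add list"
  assumes d: "distinct H" and z: "0 \<notin> set H" and c2: "\<forall>x::'v. x + x = 0"
    and T: "T \<subseteq> set H" "card T = 3" "\<Sum>T = 0"
  shows "has_min_distance H 3"
  unfolding has_min_distance_def
proof
  define S where "S = {i. i < length H \<and> H ! i \<in> T}"
  have S1: "S \<subseteq> {..<length H}" unfolding S_def by auto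
  have "nth H ` S = T" using T(1) unfolding S_def by (auto simp: set_conv_nth)
  with sum_cols_distinct[OF d S1] T have "sum_cols H S = 0" "card S = 3" by auto
  thus "\<exists>S\<in>codewords H. S \<noteq> {} \<and> card S = 3" using S1 unfolding codewords_def
    by (intro bexI[of _ S]) auto
next
  show "\<forall>S\<in>codewords H. S \<noteq> {} \<longrightarrow> 3 \<le> card S"
  proof (intro ballI impI, rule ccontr)
    fix S assume S: "S \<in> codewords H" "S \<noteq> {}" "\<not> 3 \<le> card S"
    have Ss: "S \<subseteq> {..<length H}" "sum_cols H S = 0" using S(1) unfolding codewords_def by auto
    have fin: "finite S" using Ss(1) finite_subset by blast
    have "card S \<noteq> 0" using fin S(2) by simp
    hence "card S = 1 \<or> card S = 2" using S(3) by linarith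
    thus False
    proof
      assume "card S = 1"
      then obtain i where "S = {i}" by (rule card_1_singletonE)
      thus False using Ss z unfolding sum_cols_def by (auto simp: set_conv_nth)
    next
      assume "card S = 2"
      then obtain i j where ij: "S = {i,j}" "i \<noteq> j" by (auto simp: card_2_iff)
      hence "H ! i + H ! j = 0" "i < length H" "j < length H" using Ss unfolding sum_cols_def by auto
      hence "H ! i = H ! j" using c2 by (metis add.assoc add.right_neutral)
      thus False using ij d \<open>i < length H\<close> \<open>j < length H\<close> by (simp add: nth_eq_iff_index_eq)
    qed
  qed
qed

lemma from_mindist3:
  fixes H :: "'v::comm_monoid_add list"
  assumes md: "has_min_distance H 3" and c2: "\<forall>x::'v. x + x = 0"
  shows "distinct H" "0 \<notin> set H"
    "\<exists>i j k. i < length H \<and> j < length H \<and> k < length H \<and> i \<noteq> j \<and> j \<noteq> k \<and> i \<noteq> k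
       \<and> H ! i + H ! j + H ! k = 0"
proof -
  have low: "\<And>S. S \<subseteq> {..<length H} \<Longrightarrow> sum_cols H S = 0 \<Longrightarrow> S \<noteq> {} \<Longrightarrow> 3 \<le> card S"
    using md unfolding has_min_distance_def codewords_def by auto
  show "distinct H"
  proof (rule ccontr)
    assume "\<not> distinct H"
    then obtain i j where ij: "i < length H" "j < length H" "i \<noteq> j" "H ! i = H ! j"
      by (auto simp: distinct_conv_nth)
    have "sum_cols H {i,j} = 0" using ij c2 unfolding sum_cols_def by simp
    with low[of "{i,j}"] ij show False by auto
  qed
  show "0 \<notin> set H"
  proof
    assume "0 \<in> set H"
    then obtain i where i: "i < length H" "H ! i = 0" by (auto simp: set_conv_nth)
    have "sum_cols H {i} = 0" using i unfolding sum_cols_def by simp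
    with low[of "{i}"] i show False by auto
  qed
  obtain S where S: "S \<subseteq> {..<length H}" "sum_cols H S = 0" "card S = 3"
    using md unfolding has_min_distance_def codewords_def by auto
  then obtain i j k where "S = {i,j,k}" "i \<noteq> j" "j \<noteq> k" "i \<noteq> k" by (auto simp: card_3_iff)
  thus "\<exists>i j k. i < length H \<and> j < length H \<and> k < length H \<and> i \<noteq> j \<and> j \<noteq> k \<and> i \<noteq> k
       \<and> H ! i + H ! j + H ! k = 0" using S unfolding sum_cols_def
    by (intro exI[of _ i] exI[of _ j] exI[of _ k]) (auto simp: add.assoc)
qed

lemma card_codewords:
  fixes H :: "'v::comm_monoid_add list"
  assumes fin: "finite (UNIV::'v set)" and c2: "\<forall>x::'v. x + x = 0" and surj: "\<forall>v. \<exists>S\<subseteq>{..<length H}. sum_cols H S = v"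
  shows "card (codewords H) * CARD('v) = 2 ^ length H"
proof -
  let ?A = "{..<length H}"
  let ?f = "sum_cols H"
  let ?d = "\<lambda>S T. (S - T) \<union> (T - S)"
  have symd: "?f (?d S T) = ?f S + ?f T" if "S \<subseteq> ?A" "T \<subseteq> ?A" for S T
  proof -
    have fS: "finite S" "finite T" using that finite_subset by auto
    have "?f (?d S T) = sum (nth H) (S - T) + sum (nth H) (T - S)"
      unfolding sum_cols_def using fS by (intro sum.union_disjoint) auto
    moreover have "?f S = sum (nth H) (S - T) + sum (nth H) (S \<inter> T)"
      unfolding sum_cols_def using fS sum.Int_Diff[of S "nth H" T] by (simp add: add.commute)
    moreover have "?f T = sum (nth H) (T - S) + sum (nth H) (S \<inter> T)"
      unfolding sum_cols_def using fS sum.Int_Diff[of T "nth H" S] by (simp add: add.commute Int_commute)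
    moreover have "\<And>a b z::'v. (a + z) + (b + z) = a + b"
    proof -
      fix a b z :: 'v
      have "(a + z) + (b + z) = a + b + (z + z)" by (simp add: ac_simps)
      thus "(a + z) + (b + z) = a + b" using c2 by simp
    qed
    ultimately show ?thesis by simp
  qed
  define F where "F v = {S \<in> Pow ?A. ?f S = v}" for v
  have cw: "codewords H = F 0" unfolding F_def codewords_def by auto
  have same: "card (F v) = card (F 0)" for v
  proof -
    obtain Sv where Sv: "Sv \<subseteq> ?A" "?f Sv = v" using surj by blast
    have "bij_betw (\<lambda>S. ?d S Sv) (F 0) (F v)"
    proof (rule bij_betw_byWitness[where f' = "\<lambda>S. ?d S Sv"])
      show "\<forall>a\<in>F 0. ?d (?d a Sv) Sv = a" by auto
      show "\<forall>a\<in>F v. ?d (?d a Sv) Sv = a" by auto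
      show "(\<lambda>S. ?d S Sv) ` F 0 \<subseteq> F v"
        using Sv symd unfolding F_def by auto
      show "(\<lambda>S. ?d S Sv) ` F v \<subseteq> F 0"
        using Sv symd c2 unfolding F_def by auto
    qed
    thus ?thesis by (simp add: bij_betw_same_card)
  qed
  have "Pow ?A = (\<Union>v\<in>UNIV. F v)" unfolding F_def by auto
  hence "card (Pow ?A) = (\<Sum>v\<in>UNIV. card (F v))"
    by (simp only:) (rule card_UN_disjoint, auto simp: F_def fin)
  also have "\<dots> = (\<Sum>v::'v\<in>UNIV. card (F 0))" by (rule sum.cong[OF refl]) (rule same)
  also have "\<dots> = CARD('v) * card (F 0)" by simp
  finally show ?thesis using cw by (simp add: card_Pow)
qed



lemma field_elems: "set (field_elems::'f::finite list) = UNIV \<and> distinct (field_elems::'f list)"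
proof -
  have "\<exists>xs::'f list. distinct xs \<and> set xs = UNIV"
    using finite_distinct_list[of "UNIV::'f set"] by auto
  hence "distinct (field_elems::'f list) \<and> set (field_elems::'f list) = UNIV"
    unfolding field_elems_def by (rule someI_ex)
  thus ?thesis by auto
qed

lemma set_field_elems[simp]: "set (field_elems::'f::finite list) = UNIV" using field_elems by blast
lemma distinct_field_elems[simp]: "distinct (field_elems::'f::finite list)" using field_elems by blast

lemma length_field_elems: "length (field_elems::'f::finite list) = CARD('f)"
  by (metis distinct_card set_field_elems distinct_field_elems)

definition colf :: "'h \<Rightarrow> 'f::{field,finite} option \<Rightarrow> 'f \<Rightarrow> 'h \<times> 'f \<times> 'f" where
  "colf h b \<xi> = (case b of Some c \<Rightarrow> (h, \<xi>, c * \<xi>) | None \<Rightarrow> (h, 0, \<xi>))"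

lemma A2_colf: "A2 h b = map (colf h b) field_elems"
  unfolding A2_def colf_def by (cases b) auto

lemma inj_colf: "inj (colf h b)"
  unfolding colf_def by (cases b) (auto simp: inj_def)

lemma fst_colf [simp]: "fst (colf h b \<xi>) = h"
  unfolding colf_def by (cases b) auto

lemma colf_0 [simp]: "colf h b 0 = (h, 0, 0)"
  unfolding colf_def by (cases b) auto

lemma W_minus: "set (W_minus w) = {u. u \<noteq> 0 \<and> u \<noteq> w}" "distinct (W_minus w)"
  unfolding W_minus_def by auto

lemma length_W_minus:
  assumes "w \<noteq> (0::'f::{field,finite})"
  shows "length (W_minus w) = CARD('f) - 2"
proof -
  have "length (W_minus w) = card {u::'f. u \<noteq> 0 \<and> u \<noteq> w}"
    by (metis W_minus distinct_card)
  also have "{u::'f. u \<noteq> 0 \<and> u \<noteq> w} = UNIV - {0, w}" by auto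
  also have "card \<dots> = CARD('f) - 2" using assms by (subst card_Diff_subset) auto
  finally show ?thesis .
qed

definition CC :: "'h list \<Rightarrow> (nat \<Rightarrow> 'f::{field,finite} option) \<Rightarrow> nat \<Rightarrow> ('h \<times> 'f \<times> 'f) list" where
  "CC H0 \<beta> n = concat (map (\<lambda>j. A2 (H0 ! j) (\<beta> j)) [0..<n])"

lemma CC_props:
  fixes H0 :: "'h list" and \<beta> :: "nat \<Rightarrow> 'f::{field,finite} option"
  assumes "distinct H0" "n \<le> length H0"
  shows "distinct (CC H0 \<beta> n) \<and> length (CC H0 \<beta> n) = n * CARD('f) \<and>
         set (CC H0 \<beta> n) = {colf (H0 ! j) (\<beta> j) \<xi> | j \<xi>. j < n}"
  using assms(2)
proof (induction n)
  case 0
  then show ?case by (simp add: CC_def)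
next
  case (Suc n)
  have e: "CC H0 \<beta> (Suc n) = CC H0 \<beta> n @ map (colf (H0 ! n) (\<beta> n)) field_elems"
    by (simp add: CC_def A2_colf)
  have IH: "distinct (CC H0 \<beta> n)" "length (CC H0 \<beta> n) = n * CARD('f)"
    "set (CC H0 \<beta> n) = {colf (H0 ! j) (\<beta> j) \<xi> | j \<xi>. j < n}" using Suc by auto
  have d2: "distinct (map (colf (H0 ! n) (\<beta> n)) field_elems)"
    using inj_colf by (simp add: distinct_map inj_on_def inj_def)
  have disj: "set (CC H0 \<beta> n) \<inter> set (map (colf (H0 ! n) (\<beta> n)) field_elems) = {}"
  proof -
    { fix j \<xi> \<eta> assume "j < n" "colf (H0 ! j) (\<beta> j) \<xi> = colf (H0 ! n) (\<beta> n) \<eta>"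
      hence "H0 ! j = H0 ! n" by (metis fst_colf)
      hence False using \<open>j < n\<close> Suc.prems assms(1) by (simp add: nth_eq_iff_index_eq) }
    thus ?thesis using IH(3) by auto
  qed
  have st: "set (CC H0 \<beta> (Suc n)) = {colf (H0 ! j) (\<beta> j) \<xi> | j \<xi>. j < Suc n}"
    unfolding e using IH(3) by (auto simp: less_Suc_eq)
  show ?case using e IH d2 disj st length_field_elems by simp
qed

lemma D6_props:
  fixes w :: "'f::{field,finite}"
  assumes w: "w \<noteq> 0"
  shows "distinct (D6 w :: ('h::zero \<times> 'f \<times> 'f) list)"
    "length (D6 w :: ('h \<times> 'f \<times> 'f) list) = 2 * (CARD('f) - 2) + 1"
    "set (D6 w :: ('h \<times> 'f \<times> 'f) list) = {(0, u, 0) | u. u \<noteq> 0 \<and> u \<noteq> w} \<union> {(0, w, w)} \<union> {(0, 0, u) | u. u \<noteq> 0 \<and> u \<noteq> w}"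
  unfolding D6_def using W_minus length_W_minus[OF w] w
  by (auto simp: distinct_map inj_on_def)

lemma HC_props:
  fixes H0 :: "'h::zero list" and \<beta> :: "nat \<Rightarrow> 'f::{field,finite} option"
  assumes d: "distinct H0" and z: "0 \<notin> set H0" and w: "w \<noteq> 0"
  shows "distinct (HC w H0 \<beta>)"
    "length (HC w H0 \<beta>) = 2 * (CARD('f) - 2) + 1 + length H0 * CARD('f)"
    "set (HC w H0 \<beta>) = {(0, u, 0) | u. u \<noteq> 0 \<and> u \<noteq> w} \<union> {(0, w, w)} \<union> {(0, 0, u) | u. u \<noteq> 0 \<and> u \<noteq> w}
        \<union> {colf (H0 ! j) (\<beta> j) \<xi> | j \<xi>. j < length H0}"
proof -
  have HC: "HC w H0 \<beta> = D6 w @ CC H0 \<beta> (length H0)" unfolding HC_def CC_def ..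
  note C = CC_props[OF d order_refl, of \<beta>]
  note D = D6_props[OF w, where 'h='h]
  have "set (D6 w :: ('h \<times> 'f \<times> 'f) list) \<inter> set (CC H0 \<beta> (length H0)) = {}"
  proof -
    { fix j \<xi> assume "j < length H0" "colf (H0 ! j) (\<beta> j) \<xi> \<in> set (D6 w :: ('h \<times> 'f \<times> 'f) list)"
      hence "H0 ! j = 0" using D(3) by (auto dest!: arg_cong[where f=fst])
      hence False using z \<open>j < length H0\<close> by (metis nth_mem) }
    thus ?thesis using C by auto
  qed
  thus "distinct (HC w H0 \<beta>)" using C D unfolding HC by simp
  show "length (HC w H0 \<beta>) = 2 * (CARD('f) - 2) + 1 + length H0 * CARD('f)"
    using C D unfolding HC by simp
  show "set (HC w H0 \<beta>) = {(0, u, 0) | u. u \<noteq> 0 \<and> u \<noteq> w} \<union> {(0, w, w)} \<union> {(0, 0, u) | u. u \<noteq> 0 \<and> u \<noteq> w}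
        \<union> {colf (H0 ! j) (\<beta> j) \<xi> | j \<xi>. j < length H0}"
    using C D unfolding HC by simp
qed



definition cov2 :: "'v::comm_monoid_add set \<Rightarrow> 'v \<Rightarrow> bool" where
  "cov2 X v \<longleftrightarrow> (\<exists>T\<subseteq>X. card T \<le> 2 \<and> \<Sum>T = v)"

lemma cov2_0: "cov2 X 0" unfolding cov2_def by (intro exI[of _ "{}"]) auto

lemma cov2_1: "c \<in> X \<Longrightarrow> c = v \<Longrightarrow> cov2 X v" unfolding cov2_def
  by (intro exI[of _ "{c}"]) auto

lemma cov2_add:
  fixes c d :: "'v::comm_monoid_add"
  assumes "\<forall>z::'v. z + z = 0" "c \<in> X" "d \<in> X" "c + d = v"
  shows "cov2 X v"
proof (cases "c = d")
  case True
  then show ?thesis using assms cov2_0 by auto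
next
  case False
  then show ?thesis using assms unfolding cov2_def by (intro exI[of _ "{c,d}"]) auto
qed

locale char2 =
  fixes dummy :: "'a::comm_monoid_add"
  assumes self: "\<And>z::'a. z + z = 0"
begin
lemma c1: "p + (p + q) = (q::'a)" by (metis add.assoc self add_0)
lemma c2: "(q + p) + p = (q::'a)" by (metis add.assoc self add_0_right)
lemma c3: "p + (q + p) = (q::'a)" by (metis add.commute c1)
lemma c4: "(p + q) + p = (q::'a)" by (metis add.commute c2)
lemma eqI: "p + q = r \<Longrightarrow> p = r + (q::'a)" using c2 by metis
end

lemma char2_prod:
  assumes "\<And>z::'h::comm_monoid_add. z + z = 0" "\<And>z::'f::comm_monoid_add. z + z = 0"
  shows "\<And>z::('h \<times> 'f \<times> 'f). z + z = 0"
  using assms by (auto simp: zero_prod_def)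

lemma cover:
  fixes H0 :: "'h::comm_monoid_add list" and \<beta> :: "nat \<Rightarrow> 'f::{field,finite} option" and w :: 'f
    and X :: "('h \<times> 'f \<times> 'f) set"
  assumes ch: "\<And>z::'h. z + z = 0" and cf: "(1::'f) + 1 = 0" and w: "w \<noteq> 0"
    and D1: "\<And>u. u \<noteq> 0 \<Longrightarrow> u \<noteq> w \<Longrightarrow> (0, u, 0) \<in> X"
    and D2: "(0, w, w) \<in> X"
    and D3: "\<And>u. u \<noteq> 0 \<Longrightarrow> u \<noteq> w \<Longrightarrow> (0, 0, u) \<in> X"
    and A: "\<And>j \<xi>. j < n0 \<Longrightarrow> colf (H0 ! j) (\<beta> j) \<xi> \<in> X"
    and not1: "\<forall>j<n0. \<beta> j \<noteq> Some 1"
    and part: "\<And>a. \<exists>S\<subseteq>{..<n0}. card S \<le> 2 \<and> sum (nth H0) S = a \<and> (\<forall>i\<in>S. \<forall>j\<in>S. i \<noteq> j \<longrightarrow> \<beta> i \<noteq> \<beta> j)"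
    and pair: "\<exists>i j. i < n0 \<and> j < n0 \<and> \<beta> i \<noteq> \<beta> j"
  shows "cov2 X v"
proof -
  have ff: "\<And>z::'f. z + z = 0"
  proof -
    fix z :: 'f
    have "z + z = (1 + 1) * z" by (simp add: distrib_right)
    thus "z + z = 0" using cf by simp
  qed
  interpret F: char2 "0::'f" by standard (rule ff)
  interpret H: char2 "0::'h" by standard (rule ch)
  have cv: "\<And>z::('h \<times> 'f \<times> 'f). z + z = 0" by (rule char2_prod[OF ch ff])
  note add2 = cov2_add[where X=X, OF allI[OF cv]]
  have colS: "colf h (Some b) \<xi> = (h, \<xi>, b * \<xi>)" for h b \<xi> by (simp add: colf_def)
  have colN: "colf h None \<xi> = (h, 0, \<xi>)" for h \<xi> by (simp add: colf_def)
  have Dw: "cov2 X (0, w, 0) \<and> cov2 X (0, 0, w)"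
  proof (cases "\<exists>u. u \<noteq> 0 \<and> u \<noteq> w")
    case True
    then obtain u where u: "u \<noteq> 0" "u \<noteq> w" by blast
    have uw: "u + w \<noteq> 0" "u + w \<noteq> w" using u F.eqI by (metis add_0, metis add_0 F.c2)
    show ?thesis
    proof
      show "cov2 X (0, w, 0)" by (rule add2[OF D1[OF u] D1[OF uw]]) (simp add: F.c1)
      show "cov2 X (0, 0, w)" by (rule add2[OF D3[OF u] D3[OF uw]]) (simp add: F.c1)
    qed
  next
    case False
    hence all: "\<And>u. u = 0 \<or> u = w" by blast
    hence w1: "w = 1" by (metis one_neq_zero)
    have vals: "\<And>j. j < n0 \<Longrightarrow> \<beta> j = None \<or> \<beta> j = Some 0"
      using not1 all w1 by (metis option.exhaust)
    from pair obtain i j where ij: "i < n0" "j < n0" "\<beta> i \<noteq> \<beta> j" by blast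
    obtain jn js where j: "jn < n0" "js < n0" "\<beta> jn = None" "\<beta> js = Some 0"
      using vals[OF ij(1)] vals[OF ij(2)] ij by metis
    show ?thesis
    proof
      show "cov2 X (0, w, 0)"
        by (rule add2[OF A[OF j(2), of 0] A[OF j(2), of w]]) (simp add: j colS ch)
      show "cov2 X (0, 0, w)"
        by (rule add2[OF A[OF j(1), of 0] A[OF j(1), of w]]) (simp add: j colN ch)
    qed
  qed
  have zero: "cov2 X (0, x, y)" for x y
  proof -
    consider "x = 0" "y = 0" | "x = 0" "y \<noteq> 0" | "x \<noteq> 0" "y = 0" | "x \<noteq> 0" "y \<noteq> 0" by blast
    then show ?thesis
    proof cases
      case 1 then show ?thesis using cov2_0[of X] by (simp add: zero_prod_def)
    next
      case 2 then show ?thesis using Dw D3[of y] cov2_1 by (cases "y = w") auto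
    next
      case 3 then show ?thesis using Dw D1[of x] cov2_1 by (cases "x = w") auto
    next
      case 4
      show ?thesis
      proof (cases "x = w"; cases "y = w")
        assume "x = w" "y = w" then show ?thesis using D2 cov2_1 by auto
      next
        assume a: "x = w" "y \<noteq> w"
        have "y + w \<noteq> 0" "y + w \<noteq> w" using a 4 by (metis F.eqI add_0, metis add_0 F.c2)
        then show ?thesis using a by (intro add2[OF D2 D3[of "y + w"]]) (simp_all add: F.c3)
      next
        assume a: "x \<noteq> w" "y = w"
        have "x + w \<noteq> 0" "x + w \<noteq> w" using a 4 by (metis F.eqI add_0, metis add_0 F.c2)
        then show ?thesis using a by (intro add2[OF D1[of "x + w"] D2]) (simp_all add: F.c2)
      next
        assume a: "x \<noteq> w" "y \<noteq> w"
        then show ?thesis using 4 by (intro add2[OF D1[of x] D3[of y]]) simp_all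
      qed
    qed
  qed
  obtain a x y where v: "v = (a, x, y)" by (cases v) auto
  obtain S where S: "S \<subseteq> {..<n0}" "card S \<le> 2" "sum (nth H0) S = a"
    "\<forall>i\<in>S. \<forall>j\<in>S. i \<noteq> j \<longrightarrow> \<beta> i \<noteq> \<beta> j" using part by blast
  have finS: "finite S" using S(1) finite_subset by blast
  have single: "cov2 X (H0 ! i, x, y)" if i: "i < n0" for i
  proof (cases "\<beta> i")
    case None
    note col = A[OF i, unfolded None colN]
    show ?thesis
    proof (cases "x = 0")
      case True then show ?thesis using col cov2_1 by auto
    next
      case False
      show ?thesis
      proof (cases "x = w")
        case True
        then show ?thesis by (intro add2[OF col[of "y + w"] D2]) (simp add: F.c2)
      next
        case xw: False
        then show ?thesis using False by (intro add2[OF col[of y] D1[of x]]) simp_all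
      qed
    qed
  next
    case (Some b)
    note col = A[OF i, unfolded Some colS]
    have b1: "b \<noteq> 1" using not1 i Some by auto
    define d where "d = y + b * x"
    have yd: "y = d + b * x" using F.eqI d_def by metis
    show ?thesis
    proof (cases "d = 0")
      case True then show ?thesis using col[of x] cov2_1 yd by auto
    next
      case d0: False
      show ?thesis
      proof (cases "d = w")
        case dw: False
        then show ?thesis using d0 yd by (intro add2[OF col[of x] D3[of d]]) (simp_all add: add.commute)
      next
        case dw: True
        show ?thesis
        proof (cases "b = 0")
          case True
          then show ?thesis using yd dw by (intro add2[OF col[of "x + w"] D2]) (simp add: F.c2)
        next
          case b0: False
          define u where "u = w / b"
          have bu: "b * u = w" using b0 by (simp add: u_def)
          have u0: "u \<noteq> 0" using bu w by auto
          have uw: "u \<noteq> w" using bu b1 w by (metis mult_cancel_right1 mult.commute)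
          have "b * (x + u) = b * x + w" using bu by (simp add: distrib_left)
          hence e2: "b * (x + u) = y" using yd dw by (simp add: add.commute)
          have e3: "x + u + u = x" by (rule F.c2)
          show ?thesis
            by (intro add2[OF col[of "x + u"] D1[OF u0 uw]]) (simp only: add_Pair e2 e3 add_0_right)
        qed
      qed
    qed
  qed
  have double: "cov2 X (H0 ! i + H0 ! j, x, y)" if ij: "i < n0" "j < n0" "\<beta> i \<noteq> \<beta> j" for i j
  proof (cases "\<beta> i")
    case Ni: None
    then obtain b where Sj: "\<beta> j = Some b" using ij by (cases "\<beta> j") auto
    show ?thesis
      by (intro add2[OF A[OF ij(1), of "y + b * x"] A[OF ij(2), of x]])
         (simp add: Ni Sj colN colS F.c2)
  next
    case Si: (Some bi)
    show ?thesis
    proof (cases "\<beta> j")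
      case Nj: None
      show ?thesis
        by (intro add2[OF A[OF ij(1), of x] A[OF ij(2), of "y + bi * x"]])
           (simp add: Nj Si colN colS F.c3)
    next
      case Sj: (Some bj)
      have ne: "bi + bj \<noteq> 0" using ij Si Sj F.eqI by (metis add_0)
      define xi where "xi = (y + bj * x) / (bi + bj)"
      have xe: "(bi + bj) * xi = y + bj * x" using ne by (simp add: xi_def)
      have "bi * xi + bj * (x + xi) = (bi + bj) * xi + bj * x" by (simp add: algebra_simps)
      also have "\<dots> = y" using xe by (simp add: F.c2 add.assoc)
      finally have e: "bi * xi + bj * (x + xi) = y" .
      have e3: "xi + (x + xi) = x" by (rule F.c3)
      show ?thesis
        by (intro add2[OF A[OF ij(1), of xi] A[OF ij(2), of "x + xi"]])
           (simp only: Sj Si colS add_Pair e e3)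
    qed
  qed
  have "card S = 0 \<or> card S = 1 \<or> card S = 2" using S(2) by linarith
  then show ?thesis
  proof (elim disjE)
    assume "card S = 0"
    hence "S = {}" using finS by simp
    then show ?thesis using S zero v by auto
  next
    assume "card S = 1"
    then obtain i where "S = {i}" by (rule card_1_singletonE)
    then show ?thesis using S single v by auto
  next
    assume "card S = 2"
    then obtain i j where "S = {i, j}" "i \<noteq> j" by (auto simp: card_2_iff)
    then show ?thesis using S double v by auto
  qed
qed



lemma card_bit: "CARD(bit) = 2"
proof -
  have u: "(UNIV::bit set) = {0, 1}" by (auto intro: bit.exhaust)
  have "CARD(bit) = card {0::bit, 1}" by (simp only: u)
  thus ?thesis by simp
qed

lemma card_V: "CARD((bit^'r) \<times> 'f::finite \<times> 'f) = 2 ^ CARD('r) * (CARD('f) * CARD('f))"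
proof -
  have "CARD((bit^'r) \<times> 'f \<times> 'f) = CARD(bit^'r) * CARD('f \<times> 'f)"
    by (metis UNIV_Times_UNIV card_cartesian_product)
  moreover have "CARD('f \<times> 'f) = CARD('f) * CARD('f)"
    by (metis UNIV_Times_UNIV card_cartesian_product)
  ultimately show ?thesis by (simp add: card_bit)
qed

lemma Un_contra: "x \<in> A \<union> B \<Longrightarrow> x \<notin> A \<Longrightarrow> x \<notin> B \<Longrightarrow> False" by blast

theorem theorem5p1:
  fixes H0 :: "(bit ^ 'r) list"
    and P0 :: "nat set set"
    and n0 m :: nat
    and \<beta> :: "nat \<Rightarrow> 'f::{field,finite} option"
    and w :: 'f
  assumes C0: "is_code H0 n0 (n0 - CARD('r)) 3 2"
    and P0: "is_2_partition H0 P0"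
    and m: "m \<ge> 1" "CARD('f) = 2 ^ m"
    and p: "2 ^ m \<ge> card P0"
    and ind: "indicator_assignment n0 P0 \<beta>"
    and not1: "\<forall>j<n0. \<beta> j \<noteq> Some 1"
    and w: "w \<noteq> 0"
  shows "is_code (HC w H0 \<beta>) (2 ^ m * (n0 + 2) - 3) (2 ^ m * (n0 + 2) - 3 - (CARD('r) + 2 * m)) 3 2"
proof -
  have cf: "(1::'f) + 1 = 0" by (rule char2[OF m(2) m(1)])
  have ch: "\<And>z::bit^'r. z + z = 0" by (rule vec_self_add)
  have ff: "\<And>z::'f. z + z = 0"
  proof -
    fix z :: 'f
    have "z + z = (1 + 1) * z" by (simp add: distrib_right)
    thus "z + z = 0" using cf by simp
  qed
  have cv: "\<And>z::((bit^'r) \<times> 'f \<times> 'f). z + z = 0" by (rule char2_prod[OF ch ff])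
  have cv': "\<forall>z::((bit^'r) \<times> 'f \<times> 'f). z + z = 0" using cv by blast
  have ch': "\<forall>z::bit^'r. z + z = 0" using ch by blast
  have len: "length H0 = n0" and md: "has_min_distance H0 3" and cr: "has_covering_radius H0 2"
    using C0 unfolding is_code_def by auto
  note mdH = from_mindist3[OF md ch']
  have dH0: "distinct H0" and zH0: "0 \<notin> set H0" using mdH by auto
  obtain i0 j0 k0 where t: "i0 < n0" "j0 < n0" "k0 < n0" "i0 \<noteq> j0" "j0 \<noteq> k0" "i0 \<noteq> k0"
    "H0 ! i0 + H0 ! j0 + H0 ! k0 = 0" using mdH(3) len by blast
  have "\<forall>R'<2. \<not> (\<forall>v. covered_by H0 R' v)" using cr unfolding has_covering_radius_def by blast
  hence "\<not> (\<forall>v. covered_by H0 1 v)" by (erule_tac allE[of _ 1]) simp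
  then obtain v0 where v0: "\<not> covered_by H0 1 v0" by blast
  have v0z: "v0 \<noteq> 0"
  proof
    assume "v0 = 0"
    hence "covered_by H0 1 v0" unfolding covered_by_def sum_cols_def by (intro exI[of _ "{}"]) auto
    thus False using v0 by blast
  qed
  have v0h: "H0 ! j \<noteq> v0" if "j < n0" for j
  proof
    assume "H0 ! j = v0"
    hence "covered_by H0 1 v0" unfolding covered_by_def sum_cols_def using that len
      by (intro exI[of _ "{j}"]) auto
    thus False using v0 by blast
  qed
  have P0c: "\<And>v. \<exists>S \<subseteq> {..<n0}. card S \<le> 2 \<and> sum_cols H0 S = v \<and>
          (\<forall>i\<in>S. \<forall>j\<in>S. i \<noteq> j \<longrightarrow> \<not> (\<exists>B\<in>P0. i \<in> B \<and> j \<in> B))"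
    using P0 len unfolding is_2_partition_def by auto
  have part: "\<exists>S\<subseteq>{..<n0}. card S \<le> 2 \<and> sum (nth H0) S = a \<and> (\<forall>i\<in>S. \<forall>j\<in>S. i \<noteq> j \<longrightarrow> \<beta> i \<noteq> \<beta> j)" for a
  proof -
    obtain S where S: "S \<subseteq> {..<n0}" "card S \<le> 2" "sum_cols H0 S = a"
      "\<forall>i\<in>S. \<forall>j\<in>S. i \<noteq> j \<longrightarrow> \<not> (\<exists>B\<in>P0. i \<in> B \<and> j \<in> B)" using P0c by blast
    have "\<forall>i\<in>S. \<forall>j\<in>S. i \<noteq> j \<longrightarrow> \<beta> i \<noteq> \<beta> j"
    proof (intro ballI impI)
      fix i j assume ij: "i \<in> S" "j \<in> S" "i \<noteq> j"
      hence nb: "\<not> (\<exists>B\<in>P0. i \<in> B \<and> j \<in> B)" using S(4) by blast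
      have "i < n0" "j < n0" using ij S(1) by auto
      thus "\<beta> i \<noteq> \<beta> j" using ind nb unfolding indicator_assignment_def by blast
    qed
    thus ?thesis using S unfolding sum_cols_def by blast
  qed
  have pair: "\<exists>i j. i < n0 \<and> j < n0 \<and> \<beta> i \<noteq> \<beta> j"
  proof -
    obtain S where S: "S\<subseteq>{..<n0}" "card S \<le> 2" "sum (nth H0) S = v0"
      "\<forall>i\<in>S. \<forall>j\<in>S. i \<noteq> j \<longrightarrow> \<beta> i \<noteq> \<beta> j" using part by blast
    have "\<not> card S \<le> 1"
    proof
      assume "card S \<le> 1"
      hence "covered_by H0 1 v0" using S len unfolding covered_by_def sum_cols_def by auto
      thus False using v0 by blast
    qed
    hence "card S = 2" using S(2) by linarith
    then obtain i j where "S = {i, j}" "i \<noteq> j" by (auto simp: card_2_iff)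
    thus ?thesis using S by blast
  qed
  note HP = HC_props[OF dH0 zH0 w, of \<beta>]
  define X where "X = set (HC w H0 \<beta>)"
  have D1: "\<And>u. u \<noteq> 0 \<Longrightarrow> u \<noteq> w \<Longrightarrow> (0, u, 0) \<in> X" using HP(3) unfolding X_def by blast
  have D2: "(0, w, w) \<in> X" using HP(3) unfolding X_def by blast
  have D3: "\<And>u. u \<noteq> 0 \<Longrightarrow> u \<noteq> w \<Longrightarrow> (0, 0, u) \<in> X" using HP(3) unfolding X_def by blast
  have A: "\<And>j \<xi>. j < n0 \<Longrightarrow> colf (H0 ! j) (\<beta> j) \<xi> \<in> X" using HP(3) len unfolding X_def by blast
  have Xfst: "fst c = 0 \<or> (\<exists>j<n0. fst c = H0 ! j)" if "c \<in> X" for c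
    using that HP(3) len unfolding X_def by auto
  have covall: "cov2 X v" for v
    by (rule cover[OF ch cf w D1 D2 D3 A not1 part pair])
  have covered: "covered_by (HC w H0 \<beta>) 2 v" for v
    using covall[of v] unfolding covered_distinct[OF HP(1)] cov2_def X_def .
  have L: "length (HC w H0 \<beta>) = 2 ^ m * (n0 + 2) - 3"
  proof -
    define Q :: nat where "Q = 2 ^ m"
    have "(2::nat) ^ 1 \<le> 2 ^ m" using m(1) by (rule power_increasing) simp
    hence Q2: "2 \<le> Q" unfolding Q_def by simp
    have e: "Q * (n0 + 2) = n0 * Q + 2 * Q" by (simp add: algebra_simps)
    have "length (HC w H0 \<beta>) = 2 * (Q - 2) + 1 + n0 * Q" using HP(2) len m(2) unfolding Q_def by simp
    also have "\<dots> = Q * (n0 + 2) - 3" using Q2 e by linarith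
    finally show ?thesis unfolding Q_def .
  qed
  have finV: "finite (UNIV::((bit^'r) \<times> 'f \<times> 'f) set)"
    by (rule card_ge_0_finite) (simp add: card_V card_bit)
  have cw: "card (codewords (HC w H0 \<beta>)) * CARD((bit^'r) \<times> 'f \<times> 'f) = 2 ^ length (HC w H0 \<beta>)"
  proof (rule card_codewords[OF finV cv'])
    show "\<forall>v. \<exists>S\<subseteq>{..<length (HC w H0 \<beta>)}. sum_cols (HC w H0 \<beta>) S = v"
      using covered unfolding covered_by_def by blast
  qed
  define N where "N = 2 ^ m * (n0 + 2) - 3"
  define K where "K = CARD('r) + 2 * m"
  have cardV: "CARD((bit^'r) \<times> 'f \<times> 'f) = 2 ^ K"
    unfolding K_def card_V m(2) by (simp only: power_add mult_2)
  have cw2: "card (codewords (HC w H0 \<beta>)) * 2 ^ K = 2 ^ N"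
    using cw L cardV unfolding N_def by simp
  have cwN: "card (codewords (HC w H0 \<beta>)) = 2 ^ (N - K)"
  proof -
    have nz: "card (codewords (HC w H0 \<beta>)) \<noteq> 0"
    proof
      assume "card (codewords (HC w H0 \<beta>)) = 0"
      thus False using cw2 by simp
    qed
    have "1 * 2 ^ K \<le> card (codewords (HC w H0 \<beta>)) * 2 ^ K"
      by (rule mult_le_mono1) (use nz in simp)
    hence "2 ^ K \<le> (2::nat) ^ N" using cw2 by simp
    hence KN: "K \<le> N" by simp
    hence "(2::nat) ^ N = 2 ^ (N - K) * 2 ^ K" by (simp flip: power_add)
    thus ?thesis using cw2 by simp
  qed
  have z: "0 \<notin> set (HC w H0 \<beta>)"
  proof
    assume "0 \<in> set (HC w H0 \<beta>)"
    hence m0: "(0, 0, 0) \<in> set (HC w H0 \<beta>)" by (simp only: zero_prod_def)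
    have n1: "(0::bit^'r, 0::'f, 0::'f) \<notin> {(0, u, 0) | u. u \<noteq> 0 \<and> u \<noteq> w} \<union> {(0, w, w)} \<union> {(0, 0, u) | u. u \<noteq> 0 \<and> u \<noteq> w}"
      using w by auto
    have n2: "(0::bit^'r, 0::'f, 0::'f) \<notin> {colf (H0 ! j) (\<beta> j) \<xi> | j \<xi>. j < length H0}"
    proof
      assume "(0::bit^'r, 0::'f, 0::'f) \<in> {colf (H0 ! j) (\<beta> j) \<xi> | j \<xi>. j < length H0}"
      hence "\<exists>j \<xi>. (0::bit^'r, 0::'f, 0::'f) = colf (H0 ! j) (\<beta> j) \<xi> \<and> j < length H0"
        by (simp only: mem_Collect_eq)
      then obtain j \<xi> where j0: "(0::bit^'r, 0::'f, 0::'f) = colf (H0 ! j) (\<beta> j) \<xi>" and j: "j < length H0"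
        by (elim exE conjE)
      have "H0 ! j = 0" using arg_cong[OF j0, of fst] by simp
      thus False using j zH0 nth_mem by metis
    qed
    have m1: "(0::bit^'r, 0::'f, 0::'f) \<in> ({(0, u, 0) | u. u \<noteq> 0 \<and> u \<noteq> w} \<union> {(0, w, w)} \<union> {(0, 0, u) | u. u \<noteq> 0 \<and> u \<noteq> w})
        \<union> {colf (H0 ! j) (\<beta> j) \<xi> | j \<xi>. j < length H0}" using m0 unfolding HP(3) .
    show False by (rule Un_contra[OF m1 n1 n2])
  qed
  have MD: "has_min_distance (HC w H0 \<beta>) 3"
  proof (rule mindist3[OF HP(1) z cv'])
    let ?T = "{(H0 ! i0, 0::'f, 0::'f), (H0 ! j0, 0, 0), (H0 ! k0, 0, 0)}"
    show "?T \<subseteq> set (HC w H0 \<beta>)" using A[of i0 0] A[of j0 0] A[of k0 0] t unfolding X_def by simp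
    have ne: "H0 ! i0 \<noteq> H0 ! j0" "H0 ! j0 \<noteq> H0 ! k0" "H0 ! i0 \<noteq> H0 ! k0"
      using t dH0 len by (simp_all add: nth_eq_iff_index_eq)
    thus "card ?T = 3" by simp
    show "\<Sum>?T = 0" using ne t(7) by (simp add: add.assoc zero_prod_def)
  qed
  have notc: "\<not> covered_by (HC w H0 \<beta>) R (v0, 0, 0)" if "R \<le> 1" for R
  proof
    assume "covered_by (HC w H0 \<beta>) R (v0, 0, 0)"
    hence "\<exists>T\<subseteq>set (HC w H0 \<beta>). card T \<le> R \<and> \<Sum>T = (v0, 0, 0)"
      by (simp only: covered_distinct[OF HP(1)])
    then obtain T where T0: "T \<subseteq> X" "card T \<le> R" "\<Sum>T = (v0, 0, 0)"
      unfolding X_def by blast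
    have T: "T \<subseteq> X" "card T \<le> 1" "\<Sum>T = (v0, 0, 0)" using T0 that by auto
    have "finite T" using T(1) unfolding X_def using finite_subset by blast
    hence "card T = 0 \<or> card T = 1" using T(2) by linarith
    thus False
    proof
      assume "card T = 0"
      hence "T = {}" using \<open>finite T\<close> by simp
      thus False using T v0z by (simp add: zero_prod_def)
    next
      assume "card T = 1"
      then obtain c where "T = {c}" by (rule card_1_singletonE)
      hence cX: "c \<in> X" and fc: "fst c = v0" using T by auto
      have "fst c = 0 \<or> (\<exists>j<n0. fst c = H0 ! j)" by (rule Xfst[OF cX])
      thus False
      proof
        assume "fst c = 0" thus False using fc v0z by simp
      next
        assume "\<exists>j<n0. fst c = H0 ! j"
        then obtain j where "j < n0" "fst c = H0 ! j" by (elim exE conjE)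
        thus False using v0h[of j] fc by simp
      qed
    qed
  qed
  have CR2: "\<forall>R'<2. \<not> (\<forall>v. covered_by (HC w H0 \<beta>) R' v)"
  proof (intro allI impI)
    fix R' :: nat assume "R' < 2"
    hence "R' \<le> 1" by simp
    thus "\<not> (\<forall>v. covered_by (HC w H0 \<beta>) R' v)" using notc by blast
  qed
  have CR: "has_covering_radius (HC w H0 \<beta>) 2"
    unfolding has_covering_radius_def using covered CR2 by blast
  show ?thesis unfolding is_code_def
    using L cwN MD CR unfolding N_def K_def by simp
qed

end
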